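(* Let $\varphi\colon\mathcal{A}\to\mathcal{A}^*$ be a substitution of constant length $k$. Then: (1) For any $x,y\in\mathcal{A}^{\mathbf{Z}}$ and $m\geq1$, $\varphi^m(x)=\varphi^m(y)$ if and only if $\Theta(x)=\Theta(y)$ for all $\Theta\in\mathrm{F}_{\varphi,m}$. (2) There exists $n\geq1$ such that $\varphi^n$ is column-constant.
   Context: $\varphi$ has constant length $k\geq2$ and acts on $\mathcal{A}^{\mathbf{Z}}$ by concatenation. For $i\in[0,k-1]$, $\Psi_i\colon\mathcal{A}\to\mathcal{A}$, $a\mapsto\varphi(a)_i$ (the $i$-th letter, indexing from $0$), extended letterwise to $\mathcal{A}^{\mathbf{Z}}$. For $\mathbf{i}=i_0\cdots i_{m-1}\in[0,k-1]^m$, $\Psi_{\mathbf{i}}=\Psi_{i_{m-1}}\circ\cdots\circ\Psi_{i_0}$ (identity if $m=0$), and $\mathrm{F}_{\varphi,m}=\{\Psi_{\mathbf{i}}:\mathbf{i}\in[0,k-1]^m\}$. A substitution $\psi$ of constant length is column-constant if the sets $\mathrm{F}_{\psi,m}$, $m\geq1$, are all equal. *)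

theory Defs
  imports Main
begin

definition const_length :: "('a \<Rightarrow> 'a list) \<Rightarrow> nat \<Rightarrow> bool" where
  "const_length \<phi> k \<longleftrightarrow> (\<forall>a. length (\<phi> a) = k)"

text \<open>Action on A^Z by concatenation: position q*k + r of phi(x) is letter r of phi(x_q).\<close>
definition subst_act :: "('a \<Rightarrow> 'a list) \<Rightarrow> nat \<Rightarrow> (int \<Rightarrow> 'a) \<Rightarrow> (int \<Rightarrow> 'a)" where
  "subst_act \<phi> k x = (\<lambda>n. \<phi> (x (n div int k)) ! nat (n mod int k))"

fun subst_pow :: "('a \<Rightarrow> 'a list) \<Rightarrow> nat \<Rightarrow> 'a \<Rightarrow> 'a list" where
  "subst_pow \<phi> 0 a = [a]"
| "subst_pow \<phi> (Suc n) a = concat (map \<phi> (subst_pow \<phi> n a))"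

definition Psi :: "('a \<Rightarrow> 'a list) \<Rightarrow> nat \<Rightarrow> 'a \<Rightarrow> 'a" where
  "Psi \<phi> i = (\<lambda>a. \<phi> a ! i)"

text \<open>Psi_{i_0...i_{m-1}} = Psi_{i_{m-1}} o ... o Psi_{i_0} (identity for the empty word).\<close>
definition Psi_word :: "('a \<Rightarrow> 'a list) \<Rightarrow> nat list \<Rightarrow> 'a \<Rightarrow> 'a" where
  "Psi_word \<phi> is = fold (\<lambda>i f. Psi \<phi> i \<circ> f) is id"

definition F_set :: "('a \<Rightarrow> 'a list) \<Rightarrow> nat \<Rightarrow> nat \<Rightarrow> ('a \<Rightarrow> 'a) set" where
  "F_set \<phi> k m = {Psi_word \<phi> is | is. length is = m \<and> set is \<subseteq> {0..<k}}"

definition column_constant :: "('a \<Rightarrow> 'a list) \<Rightarrow> nat \<Rightarrow> bool" where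
  "column_constant \<psi> k \<longleftrightarrow> (\<forall>m\<ge>1. \<forall>m'\<ge>1. F_set \<psi> k m = F_set \<psi> k m')"

end

theory Submission
  imports Defs
begin

definition comp_set :: "('a \<Rightarrow> 'a) set \<Rightarrow> ('a \<Rightarrow> 'a) set \<Rightarrow> ('a \<Rightarrow> 'a) set" where
  "comp_set A B = {a \<circ> b | a b. a \<in> A \<and> b \<in> B}"

fun cpow :: "('a \<Rightarrow> 'a) set \<Rightarrow> nat \<Rightarrow> ('a \<Rightarrow> 'a) set" where
  "cpow A 0 = {id}"
| "cpow A (Suc m) = comp_set (cpow A m) A"

definition PP :: "('a \<Rightarrow> 'a list) \<Rightarrow> nat \<Rightarrow> ('a \<Rightarrow> 'a) set" where
  "PP \<phi> k = {Psi \<phi> i | i. i < k}"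

lemma comp_set_assoc: "comp_set (comp_set A B) C = comp_set A (comp_set B C)"
  unfolding comp_set_def by (auto simp: comp_assoc) (metis comp_assoc)+

lemma comp_set_id: "comp_set A {id} = A" "comp_set {id} A = A"
  unfolding comp_set_def by auto

lemma cpow_add: "cpow A (a + b) = comp_set (cpow A a) (cpow A b)"
  by (induction b) (simp_all add: comp_set_id comp_set_assoc)

lemma cpow_one: "cpow A 1 = A"
  by (simp add: comp_set_id)

lemma cpow_mult: "cpow (cpow A n) m = cpow A (n * m)"
proof (induction m)
  case 0 then show ?case by simp
next
  case (Suc m)
  have "cpow A (n * Suc m) = cpow A (n * m + n)" by (simp add: add.commute)
  then show ?case using Suc by (simp add: cpow_add)
qed

lemma fold_Psi: "fold (\<lambda>i f. Psi \<phi> i \<circ> f) is (h :: 'a \<Rightarrow> 'a) = Psi_word \<phi> is \<circ> h"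
proof (induction "is" arbitrary: h)
  case Nil then show ?case by (simp add: Psi_word_def)
next
  case (Cons i "is")
  have a: "fold (\<lambda>i f. Psi \<phi> i \<circ> f) (i # is) h = fold (\<lambda>i f. Psi \<phi> i \<circ> f) is (Psi \<phi> i \<circ> h)"
    by (simp only: fold.simps comp_apply)
  have b: "Psi_word \<phi> (i # is) = fold (\<lambda>i f. Psi \<phi> i \<circ> f) is (Psi \<phi> i \<circ> id)"
    by (simp only: Psi_word_def fold.simps comp_apply)
  show ?case unfolding a b Cons by (simp add: comp_assoc)
qed

lemma Psi_word_Cons: "Psi_word \<phi> (i # is) = Psi_word \<phi> is \<circ> Psi \<phi> i"
proof -
  have b: "Psi_word \<phi> (i # is) = fold (\<lambda>i f. Psi \<phi> i \<circ> f) is (Psi \<phi> i \<circ> id)"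
    by (simp only: Psi_word_def fold.simps comp_apply)
  show ?thesis unfolding b fold_Psi by simp
qed

lemma F_Suc: "F_set \<phi> k (Suc m) = comp_set (F_set \<phi> k m) (PP \<phi> k)"
proof
  show "F_set \<phi> k (Suc m) \<subseteq> comp_set (F_set \<phi> k m) (PP \<phi> k)"
  proof
    fix T assume "T \<in> F_set \<phi> k (Suc m)"
    then obtain js where js: "T = Psi_word \<phi> js" "length js = Suc m" "set js \<subseteq> {0..<k}"
      unfolding F_set_def by auto
    then obtain i "is" where "js = i # is" by (cases js) auto
    then show "T \<in> comp_set (F_set \<phi> k m) (PP \<phi> k)"
      using js unfolding comp_set_def F_set_def PP_def
      by (auto simp: Psi_word_Cons)
  qed
next
  show "comp_set (F_set \<phi> k m) (PP \<phi> k) \<subseteq> F_set \<phi> k (Suc m)"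
  proof
    fix T assume "T \<in> comp_set (F_set \<phi> k m) (PP \<phi> k)"
    then obtain "is" i where "T = Psi_word \<phi> is \<circ> Psi \<phi> i" "length is = m"
      "set is \<subseteq> {0..<k}" "i < k"
      unfolding comp_set_def F_set_def PP_def by auto
    then show "T \<in> F_set \<phi> k (Suc m)"
      unfolding F_set_def
      by (intro CollectI exI[of _ "i # is"]) (auto simp: Psi_word_Cons)
  qed
qed

lemma F_cpow: "F_set \<phi> k m = cpow (PP \<phi> k) m"
proof (induction m)
  case 0 then show ?case by (auto simp: F_set_def Psi_word_def)
next
  case (Suc m) then show ?case by (simp add: F_Suc)
qed

lemma nth_concat_const:
  assumes "\<forall>x\<in>set xs. length (f x) = k" "q < length xs" "i < k"
  shows "concat (map f xs) ! (q * k + i) = f (xs ! q) ! i"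
  using assms
proof (induction xs arbitrary: q)
  case Nil then show ?case by simp
next
  case (Cons x xs)
  show ?case
  proof (cases q)
    case 0 then show ?thesis using Cons by (simp add: nth_append)
  next
    case (Suc q')
    have "Suc q' * k + i = k + (q' * k + i)" by simp
    then show ?thesis using Cons Suc by (simp add: nth_append)
  qed
qed

lemma len_pow: "const_length \<phi> k \<Longrightarrow> length (subst_pow \<phi> n a) = k ^ n"
  by (induction n) (auto simp: const_length_def length_concat comp_def sum_list_triv)

lemma lt_aux: "q < (K::nat) \<Longrightarrow> i < k \<Longrightarrow> q * k + i < K * k"
proof -
  assume "q < K" "i < k"
  then have "q * k + i < q * k + k" by simp
  also have "\<dots> = Suc q * k" by simp
  also have "\<dots> \<le> K * k" using \<open>q < K\<close> by (intro mult_right_mono) auto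
  finally show ?thesis .
qed

lemma PP_pow: "const_length \<phi> k \<Longrightarrow> k > 0 \<Longrightarrow> PP (subst_pow \<phi> n) (k ^ n) = cpow (PP \<phi> k) n"
proof (induction n)
  case 0
  show ?case by (auto simp: PP_def Psi_def fun_eq_iff)
next
  case (Suc n)
  have cl: "\<And>a. \<forall>x\<in>set (subst_pow \<phi> n a). length (\<phi> x) = k"
    using Suc.prems by (auto simp: const_length_def)
  have L: "\<And>a. length (subst_pow \<phi> n a) = k ^ n" using len_pow[OF Suc.prems(1)] by blast
  have "cpow (PP \<phi> k) (Suc n) = comp_set (PP \<phi> k) (cpow (PP \<phi> k) n)"
    using cpow_add[of "PP \<phi> k" 1 n] by (simp add: comp_set_id)
  also have "\<dots> = comp_set (PP \<phi> k) (PP (subst_pow \<phi> n) (k ^ n))"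
    using Suc by simp
  also have "\<dots> = PP (subst_pow \<phi> (Suc n)) (k ^ Suc n)"
  proof
    show "comp_set (PP \<phi> k) (PP (subst_pow \<phi> n) (k ^ n)) \<subseteq> PP (subst_pow \<phi> (Suc n)) (k ^ Suc n)"
    proof
      fix T assume "T \<in> comp_set (PP \<phi> k) (PP (subst_pow \<phi> n) (k ^ n))"
      then obtain i q where iq: "T = Psi \<phi> i \<circ> Psi (subst_pow \<phi> n) q" "i < k" "q < k ^ n"
        unfolding comp_set_def PP_def by auto
      have "T = Psi (subst_pow \<phi> (Suc n)) (q * k + i)"
        using iq nth_concat_const[OF cl, of q _ i] L by (auto simp: Psi_def fun_eq_iff)
      moreover have "q * k + i < k ^ Suc n"
        using lt_aux[OF iq(3) iq(2)] by (simp add: mult.commute)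
      ultimately show "T \<in> PP (subst_pow \<phi> (Suc n)) (k ^ Suc n)"
        unfolding PP_def by blast
    qed
  next
    show "PP (subst_pow \<phi> (Suc n)) (k ^ Suc n) \<subseteq> comp_set (PP \<phi> k) (PP (subst_pow \<phi> n) (k ^ n))"
    proof
      fix T assume "T \<in> PP (subst_pow \<phi> (Suc n)) (k ^ Suc n)"
      then obtain j where j: "T = Psi (subst_pow \<phi> (Suc n)) j" "j < k ^ Suc n"
        unfolding PP_def by auto
      define q where "q = j div k"
      define i where "i = j mod k"
      have ji: "j = q * k + i" unfolding q_def i_def by simp
      have ik: "i < k" unfolding i_def using Suc.prems by simp
      have qk: "q < k ^ n" unfolding q_def using j(2)
        by (simp add: less_mult_imp_div_less mult.commute)
      have "T = Psi \<phi> i \<circ> Psi (subst_pow \<phi> n) q"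
        using j ji nth_concat_const[OF cl, of q _ i] L ik qk by (auto simp: Psi_def fun_eq_iff)
      then show "T \<in> comp_set (PP \<phi> k) (PP (subst_pow \<phi> n) (k ^ n))"
        unfolding comp_set_def PP_def using ik qk by blast
    qed
  qed
  finally show ?case by (rule sym)
qed

lemma key:
  assumes "k > 0"
  shows "(\<Theta> \<circ> subst_act \<phi> k x = \<Theta> \<circ> subst_act \<phi> k y) \<longleftrightarrow>
         (\<forall>i<k. \<Theta> \<circ> Psi \<phi> i \<circ> x = \<Theta> \<circ> Psi \<phi> i \<circ> y)"
proof
  assume H: "\<Theta> \<circ> subst_act \<phi> k x = \<Theta> \<circ> subst_act \<phi> k y"
  show "\<forall>i<k. \<Theta> \<circ> Psi \<phi> i \<circ> x = \<Theta> \<circ> Psi \<phi> i \<circ> y"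
  proof (intro allI impI ext)
    fix i q assume i: "i < k"
    have d: "(q * int k + int i) div int k = q" and m: "(q * int k + int i) mod int k = int i"
      using i assms by simp_all
    have "\<Theta> (subst_act \<phi> k x (q * int k + int i)) = \<Theta> (subst_act \<phi> k y (q * int k + int i))"
      using H by (metis comp_apply)
    moreover have m2: "nat (int i mod int k) = i" using i by (metis mod_less nat_int of_nat_mod)
    ultimately show "(\<Theta> \<circ> Psi \<phi> i \<circ> x) q = (\<Theta> \<circ> Psi \<phi> i \<circ> y) q"
      by (simp add: subst_act_def d m m2 Psi_def)
  qed
next
  assume H: "\<forall>i<k. \<Theta> \<circ> Psi \<phi> i \<circ> x = \<Theta> \<circ> Psi \<phi> i \<circ> y"
  show "\<Theta> \<circ> subst_act \<phi> k x = \<Theta> \<circ> subst_act \<phi> k y"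
  proof
    fix n
    have "nat (n mod int k) < k" using assms by (simp add: nat_less_iff)
    then have "(\<Theta> \<circ> Psi \<phi> (nat (n mod int k)) \<circ> x) (n div int k) =
               (\<Theta> \<circ> Psi \<phi> (nat (n mod int k)) \<circ> y) (n div int k)" using H by metis
    then show "(\<Theta> \<circ> subst_act \<phi> k x) n = (\<Theta> \<circ> subst_act \<phi> k y) n"
      by (simp add: subst_act_def Psi_def)
  qed
qed

lemma part1:
  assumes "k > 0"
  shows "((subst_act \<phi> k) ^^ m) x = ((subst_act \<phi> k) ^^ m) y
             \<longleftrightarrow> (\<forall>\<Theta>\<in>F_set \<phi> k m. \<Theta> \<circ> x = \<Theta> \<circ> y)"
proof (induction m arbitrary: x y)
  case 0
  then show ?case by (simp add: F_cpow)
next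
  case (Suc m)
  have "((subst_act \<phi> k) ^^ Suc m) x = ((subst_act \<phi> k) ^^ Suc m) y \<longleftrightarrow>
    ((subst_act \<phi> k) ^^ m) (subst_act \<phi> k x) = ((subst_act \<phi> k) ^^ m) (subst_act \<phi> k y)"
    by (simp add: funpow_swap1)
  also have "\<dots> \<longleftrightarrow> (\<forall>\<Theta>\<in>F_set \<phi> k m. \<Theta> \<circ> subst_act \<phi> k x = \<Theta> \<circ> subst_act \<phi> k y)"
    by (rule Suc)
  also have "\<dots> \<longleftrightarrow> (\<forall>\<Theta>\<in>F_set \<phi> k m. \<forall>i<k. \<Theta> \<circ> Psi \<phi> i \<circ> x = \<Theta> \<circ> Psi \<phi> i \<circ> y)"
    by (simp only: key[OF assms])
  also have "\<dots> \<longleftrightarrow> (\<forall>\<Theta>\<in>F_set \<phi> k (Suc m). \<Theta> \<circ> x = \<Theta> \<circ> y)"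
    unfolding F_Suc comp_set_def PP_def by (auto simp: comp_assoc) (metis comp_assoc)
  finally show ?case .
qed

lemma eventually_periodic:
  fixes T :: "nat \<Rightarrow> ('a::finite \<Rightarrow> 'a) set"
  assumes step: "\<And>m. T (Suc m) = G (T m)"
  shows "\<exists>n\<ge>1. \<forall>j\<ge>1. T (n * j) = T n"
proof -
  have "finite (range T)" by simp
  then have "\<not> inj T" using finite_imageD infinite_UNIV_nat by blast
  then obtain a b where ab: "a \<noteq> b" "T a = T b" unfolding inj_def by blast
  then obtain a b where ab: "a < b" "T a = T b"
    by (metis linorder_neqE_nat)
  define p where "p = b - a"
  have p: "p > 0" using ab unfolding p_def by simp
  have sh: "T (a + t) = T (a + p + t)" for t
    by (induction t) (use ab p_def in \<open>simp_all add: step\<close>)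
  have per: "T (a + t + j * p) = T (a + t)" for t j
  proof (induction j)
    case 0 then show ?case by simp
  next
    case (Suc j)
    have "T (a + t + Suc j * p) = T (a + p + (t + j * p))" by (simp add: algebra_simps)
    also have "\<dots> = T (a + (t + j * p))" using sh by simp
    also have "\<dots> = T (a + t)" using Suc by (simp add: add.assoc)
    finally show ?case .
  qed
  define n where "n = (a + 1) * p"
  have n1: "n \<ge> 1" unfolding n_def using p by simp
  have na: "n \<ge> a" unfolding n_def using p
    by (metis One_nat_def Suc_leI add.commute le_add2 mult.right_neutral mult_le_mono2 plus_1_eq_Suc le_trans)
  show ?thesis
  proof (intro exI[of _ n] conjI n1 allI impI)
    fix j :: nat assume j: "j \<ge> 1"
    then obtain j' where j': "j = Suc j'" by (cases j) auto
    have "n * j = a + (n - a) + (j' * (a + 1)) * p"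
      using na j' unfolding n_def by (simp add: algebra_simps)
    then have "T (n * j) = T (a + (n - a))" using per by simp
    also have "\<dots> = T n" using na by simp
    finally show "T (n * j) = T n" .
  qed
qed

theorem lemma3p8:
  fixes \<phi> :: "'a::finite \<Rightarrow> 'a list" and k :: nat
  assumes "k \<ge> 2" and "const_length \<phi> k"
  shows "(\<forall>(x::int \<Rightarrow> 'a) y m. m \<ge> 1 \<longrightarrow>
            (((subst_act \<phi> k) ^^ m) x = ((subst_act \<phi> k) ^^ m) y
             \<longleftrightarrow> (\<forall>\<Theta>\<in>F_set \<phi> k m. \<Theta> \<circ> x = \<Theta> \<circ> y)))
       \<and> (\<exists>n\<ge>1. column_constant (subst_pow \<phi> n) (k ^ n))"
proof
  have k0: "k > 0" using assms by simp
  show "\<forall>(x::int \<Rightarrow> 'a) y m. m \<ge> 1 \<longrightarrow>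
            (((subst_act \<phi> k) ^^ m) x = ((subst_act \<phi> k) ^^ m) y
             \<longleftrightarrow> (\<forall>\<Theta>\<in>F_set \<phi> k m. \<Theta> \<circ> x = \<Theta> \<circ> y))"
    using part1[OF k0] by blast
  obtain n where n: "n \<ge> 1" "\<forall>j\<ge>1. cpow (PP \<phi> k) (n * j) = cpow (PP \<phi> k) n"
    using eventually_periodic[of "cpow (PP \<phi> k)" "\<lambda>X. comp_set X (PP \<phi> k)"] by auto
  have F: "F_set (subst_pow \<phi> n) (k ^ n) m = cpow (PP \<phi> k) (n * m)" for m
    by (simp add: F_cpow PP_pow[OF assms(2) k0] cpow_mult)
  show "\<exists>n\<ge>1. column_constant (subst_pow \<phi> n) (k ^ n)"
    using n unfolding column_constant_def by (metis F)
qed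

end
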